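(* Let $X$ be a quasi-Banach space and $f=(a_n)_{n=1}^\infty\in\mathbb{F}^{\mathbb{N}}$. Then $f\in\mathscr{G}_b(X)$ if and only if the series $\sum_{n=1}^\infty a_nx_n$ converges in $X$ for every bounded sequence $(x_n)_{n=1}^\infty$ in $X$.
   Context: For $g=(b_n)\in[0,\infty]^{\mathbb{N}}$ define $\lambda_X(g)=\sup\{\|\sum_{n=1}^Nb_nx_n\|:N\in\mathbb{N},\ \|x_n\|\le1\}$ if all $b_n<\infty$, and $\lambda_X(g)=\infty$ otherwise. The galb of $X$ is $\mathscr{G}(X)=\{(a_n)\in\mathbb{F}^{\mathbb{N}}:\lambda_X((|a_n|)_n)<\infty\}$, quasi-normed by $(a_n)\mapsto\lambda_X((|a_n|)_n)$, and $\mathscr{G}_b(X)$ is the closure in $\mathscr{G}(X)$ of the finitely supported sequences. *)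

theory Defs
  imports "HOL-Analysis.Analysis"
begin

text \<open>A quasi-normed space over the scalar field 'k (R or C, rendered as a
real normed field) given by an abstract scalar multiplication sc on an
additive group 'a and a quasi-norm q.\<close>

definition quasi_norm :: "('k::real_normed_field \<Rightarrow> 'a::ab_group_add \<Rightarrow> 'a) \<Rightarrow> ('a \<Rightarrow> real) \<Rightarrow> bool" where
  "quasi_norm sc q \<longleftrightarrow> vector_space sc \<and>
     (\<forall>x. 0 \<le> q x) \<and> (\<forall>x. q x = 0 \<longleftrightarrow> x = 0) \<and>
     (\<forall>t x. q (sc t x) = norm t * q x) \<and>
     (\<exists>\<kappa>\<ge>1. \<forall>x y. q (x + y) \<le> \<kappa> * (q x + q y))"

definition quasi_complete :: "('a::ab_group_add \<Rightarrow> real) \<Rightarrow> bool" where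
  "quasi_complete q \<longleftrightarrow>
     (\<forall>x :: nat \<Rightarrow> 'a. (\<forall>\<epsilon>>0. \<exists>N. \<forall>m\<ge>N. \<forall>n\<ge>N. q (x m - x n) < \<epsilon>)
        \<longrightarrow> (\<exists>l. (\<lambda>n. q (x n - l)) \<longlonglongrightarrow> 0))"

definition quasi_banach :: "('k::real_normed_field \<Rightarrow> 'a::ab_group_add \<Rightarrow> 'a) \<Rightarrow> ('a \<Rightarrow> real) \<Rightarrow> bool" where
  "quasi_banach sc q \<longleftrightarrow> quasi_norm sc q \<and> quasi_complete q"

text \<open>lambda_X((|a_n|)_n); sequences are indexed from 0.\<close>
definition lambdaX :: "('k::real_normed_field \<Rightarrow> 'a::ab_group_add \<Rightarrow> 'a) \<Rightarrow> ('a \<Rightarrow> real) \<Rightarrow> (nat \<Rightarrow> 'k) \<Rightarrow> ereal" where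
  "lambdaX sc q a = (SUP p \<in> {(N, x). \<forall>n. q (x n) \<le> 1}.
      ereal (q (\<Sum>n<fst p. sc (of_real (norm (a n))) (snd p n))))"

definition galb :: "('k::real_normed_field \<Rightarrow> 'a::ab_group_add \<Rightarrow> 'a) \<Rightarrow> ('a \<Rightarrow> real) \<Rightarrow> (nat \<Rightarrow> 'k) set" where
  "galb sc q = {a. lambdaX sc q a < \<infinity>}"

definition galb_b :: "('k::real_normed_field \<Rightarrow> 'a::ab_group_add \<Rightarrow> 'a) \<Rightarrow> ('a \<Rightarrow> real) \<Rightarrow> (nat \<Rightarrow> 'k) set" where
  "galb_b sc q = {a \<in> galb sc q. \<forall>\<epsilon>>0. \<exists>b. finite {n. b n \<noteq> 0} \<and> lambdaX sc q (a - b) < ereal \<epsilon>}"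

definition series_converges :: "('k::real_normed_field \<Rightarrow> 'a::ab_group_add \<Rightarrow> 'a) \<Rightarrow> ('a \<Rightarrow> real) \<Rightarrow> (nat \<Rightarrow> 'k) \<Rightarrow> (nat \<Rightarrow> 'a) \<Rightarrow> bool" where
  "series_converges sc q a x \<longleftrightarrow> (\<exists>s. (\<lambda>N. q ((\<Sum>n<N. sc (a n) (x n)) - s)) \<longlonglongrightarrow> 0)"

end

theory Submission
  imports Defs
begin

locale qn =
  fixes sc :: "'k::real_normed_field \<Rightarrow> 'a::ab_group_add \<Rightarrow> 'a" and q :: "'a \<Rightarrow> real" and K :: real
  assumes vs: "vector_space sc"
    and nonneg: "\<And>x. 0 \<le> q x"
    and zero_iff: "\<And>x. q x = 0 \<longleftrightarrow> x = 0"
    and hom: "\<And>t x. q (sc t x) = norm t * q x"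
    and K1: "K \<ge> 1"
    and tri: "\<And>x y. q (x + y) \<le> K * (q x + q y)"
begin

sublocale V: vector_space sc by (rule vs)

lemma q0[simp]: "q 0 = 0" using zero_iff by simp

lemma q_neg: "q (- x) = q x"
proof -
  show ?thesis using hom[of "-1" x] by simp
qed

lemma q_sym: "q (x - y) = q (y - x)"
  by (metis minus_diff_eq q_neg)

lemma fin_bound:
  assumes "\<And>n. n < N \<Longrightarrow> q (y n) \<le> D" "0 \<le> D"
  shows "q (\<Sum>n<N. y n) \<le> (2*K)^N * D"
  using assms(1)
proof (induction N)
  case 0
  then show ?case using assms(2) by simp
next
  case (Suc N)
  have IH: "q (\<Sum>n<N. y n) \<le> (2*K)^N * D" using Suc by simp
  have yN: "q (y N) \<le> D" using Suc by simp
  have p1: "1 \<le> (2*K)^N" by (rule one_le_power) (use K1 in simp)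
  have "q (\<Sum>n<Suc N. y n) = q ((\<Sum>n<N. y n) + y N)" by simp
  also have "\<dots> \<le> K * (q (\<Sum>n<N. y n) + q (y N))" by (rule tri)
  also have "\<dots> \<le> K * ((2*K)^N * D + (2*K)^N * D)"
    using IH yN p1 K1 assms(2)
    by (intro mult_left_mono add_mono) (auto intro: order_trans[OF _ mult_right_mono[of 1 _ D, simplified]])
  also have "\<dots> = (2*K)^Suc N * D" by simp
  finally show ?case .
qed

lemma L1:
  assumes lam: "lambdaX sc q c \<le> ereal L" and xb: "\<And>n. q (x n) \<le> C" and C: "C > 0"
  shows "q (\<Sum>n<N. sc (c n) (x n)) \<le> C * L"
proof -
  define u where "u n = (if c n = 0 then 0 else c n / of_real (norm (c n)))" for n
  define y where "y n = sc (of_real (1/C) * u n) (x n)" for n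
  have nu: "norm (u n) \<le> 1" for n by (simp add: u_def norm_divide)
  have yb: "q (y n) \<le> 1" for n
  proof -
    have "q (y n) = (1/C) * norm (u n) * q (x n)" using C by (simp add: y_def hom norm_mult norm_divide)
    also have "\<dots> \<le> (1/C) * 1 * C"
      using C nu xb[of n] nonneg[of "x n"] by (intro mult_mono) auto
    finally show ?thesis using C by simp
  qed
  have cu: "of_real (norm (c n)) * u n = c n" for n by (simp add: u_def)
  have eq: "(\<Sum>n<N. sc (c n) (x n)) = sc (of_real C) (\<Sum>n<N. sc (of_real (norm (c n))) (y n))"
    unfolding V.scale_sum_right y_def
  proof (rule sum.cong[OF refl])
    fix n
    have "of_real C * (of_real (norm (c n)) * (of_real (1 / C) * u n)) = (c n :: 'k)"
      using C cu[of n] by (simp add: of_real_def field_simps)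
    then show "sc (c n) (x n) = sc (of_real C) (sc (of_real (norm (c n))) (sc (of_real (1 / C) * u n) (x n)))"
      by simp
  qed
  have "ereal (q (\<Sum>n<N. sc (of_real (norm (c n))) (y n))) \<le> lambdaX sc q c"
    unfolding lambdaX_def
    by (rule SUP_upper2[of "(N, y)"]) (auto simp: yb)
  then have "ereal (q (\<Sum>n<N. sc (of_real (norm (c n))) (y n))) \<le> ereal L" using lam by (rule order_trans)
  then have "q (\<Sum>n<N. sc (of_real (norm (c n))) (y n)) \<le> L" by simp
  then show ?thesis unfolding eq using C by (simp add: hom)
qed

lemma block_sum:
  fixes n m :: nat
  assumes "n \<le> m"
  shows "(\<Sum>k<m. f k) - (\<Sum>k<n. f k) = (\<Sum>k\<in>{n..<m}. (f k :: 'a))"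
  using sum_diff_nat_ivl[of 0 n m f] assms by (simp add: atLeast0LessThan)

lemma restrict_sum:
  fixes n m :: nat shows
  "(\<Sum>k<m. if n \<le> k then f k else 0) = (\<Sum>k\<in>{n..<m}. (f k :: 'a))"
proof -
  have "(\<Sum>k<m. if n \<le> k then f k else 0) = (\<Sum>k\<in>{k\<in>{..<m}. n \<le> k}. f k)"
    by (rule sum.inter_filter[symmetric]) simp
  also have "{k\<in>{..<m}. n \<le> k} = {n..<m}" by auto
  finally show ?thesis .
qed

lemma forward:
  assumes comp: "quasi_complete q" and a: "a \<in> galb_b sc q" and xb: "\<And>n. q (x n) \<le> C"
  shows "series_converges sc q a x"
proof -
  define C' where "C' = max C 1"
  have C': "C' > 0" "\<And>n. q (x n) \<le> C'" using xb by (auto simp: C'_def intro: order_trans[OF _ max.cobounded1])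
  define S where "S N = (\<Sum>n<N. sc (a n) (x n))" for N
  have cauchy: "\<exists>N. \<forall>m\<ge>N. \<forall>n\<ge>N. q (S m - S n) < \<epsilon>" if e: "\<epsilon> > 0" for \<epsilon>
  proof -
    have "\<epsilon> / (2*C') > 0" using e C' by simp
    then obtain b where fb: "finite {n. b n \<noteq> 0}" and lb: "lambdaX sc q (a - b) < ereal (\<epsilon> / (2*C'))"
      using a unfolding galb_b_def by blast
    obtain M where M: "{n. b n \<noteq> 0} \<subseteq> {..<M}" using finite_nat_bounded[OF fb] by blast
    have key: "q (S m - S n) < \<epsilon>" if nm: "M \<le> n" "n \<le> m" for n m
    proof -
      define x' where "x' k = (if n \<le> k then x k else 0)" for k
      have "S m - S n = (\<Sum>k\<in>{n..<m}. sc (a k) (x k))" unfolding S_def by (rule block_sum[OF nm(2)])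
      also have "\<dots> = (\<Sum>k<m. if n \<le> k then sc (a k) (x k) else 0)" by (rule restrict_sum[symmetric])
      also have "\<dots> = (\<Sum>k<m. sc ((a - b) k) (x' k))"
      proof (rule sum.cong[OF refl])
        fix k assume "k \<in> {..<m}"
        show "(if n \<le> k then sc (a k) (x k) else 0) = sc ((a - b) k) (x' k)"
        proof (cases "n \<le> k")
          case True
          then have "b k = 0" using M nm by fastforce
          then show ?thesis using True by (simp add: x'_def)
        qed (simp add: x'_def)
      qed
      also have "q \<dots> \<le> C' * (\<epsilon> / (2*C'))"
        by (rule L1[OF less_imp_le[OF lb] _ C'(1)]) (use C' nonneg in \<open>auto simp: x'_def\<close>)
      also have "\<dots> < \<epsilon>" using C' e by simp
      finally show ?thesis .
    qed
    show ?thesis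
    proof (intro exI allI impI)
      fix m n assume "M \<le> m" "M \<le> n"
      then show "q (S m - S n) < \<epsilon>"
        using key[of n m] key[of m n] q_sym[of "S m" "S n"] by (cases "n \<le> m") auto
    qed
  qed
  then obtain l where "(\<lambda>n. q (S n - l)) \<longlonglongrightarrow> 0" using comp unfolding quasi_complete_def by blast
  then show ?thesis unfolding series_converges_def S_def by blast
qed

lemma tail_small:
  assumes H: "\<And>x. (\<exists>C. \<forall>n. q (x n) \<le> C) \<Longrightarrow> series_converges sc q a x"
    and e: "\<epsilon> > 0"
  shows "\<exists>M. lambdaX sc q (\<lambda>n. if n < M then 0 else a n) \<le> ereal \<epsilon>"
proof (rule ccontr)
  assume nt: "\<not> (\<exists>M. lambdaX sc q (\<lambda>n. if n < M then 0 else a n) \<le> ereal \<epsilon>)"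
  have "\<forall>M. \<exists>N x. (\<forall>n. q (x n) \<le> 1) \<and>
      \<epsilon> < q (\<Sum>n<N. sc (of_real (norm (if n < M then 0 else a n))) (x n))"
  proof
    fix M
    from nt have "ereal \<epsilon> < lambdaX sc q (\<lambda>n. if n < M then 0 else a n)" by (simp add: not_le)
    then obtain p where p: "p \<in> {(N, x). \<forall>n. q (x n) \<le> 1}"
      "ereal \<epsilon> < ereal (q (\<Sum>n<fst p. sc (of_real (norm (if n < M then 0 else a n))) (snd p n)))"
      unfolding lambdaX_def less_SUP_iff by blast
    then show "\<exists>N x. (\<forall>n. q (x n) \<le> 1) \<and>
      \<epsilon> < q (\<Sum>n<N. sc (of_real (norm (if n < M then 0 else a n))) (x n))"
      by (cases p) auto
  qed
  then obtain Nf xf where NX: "\<And>M n. q (xf M n) \<le> 1"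
    "\<And>M. \<epsilon> < q (\<Sum>n<Nf M. sc (of_real (norm (if n < M then 0 else a n))) (xf M n))"
    by metis
  have blk: "(\<Sum>n<Nf M. sc (of_real (norm (if n < M then 0 else a n))) (xf M n))
      = (\<Sum>n\<in>{M..<Nf M}. sc (of_real (norm (a n))) (xf M n))" for M
    by (subst restrict_sum[symmetric]) (rule sum.cong, auto)
  have NfM: "M < Nf M" for M
  proof (rule ccontr)
    assume "\<not> M < Nf M"
    then have "{M..<Nf M} = {}" by auto
    then show False using NX(2)[of M] e unfolding blk by simp
  qed
  define m where "m k = (Nf ^^ k) 0" for k
  have mS: "m (Suc k) = Nf (m k)" for k by (simp add: m_def)
  have smono: "strict_mono m" unfolding strict_mono_Suc_iff using NfM mS by simp
  have mge: "k \<le> m k" for k using seq_suble[OF smono] .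
  have uniq: "j = k" if "m j \<le> n" "n < m (Suc j)" "m k \<le> n" "n < m (Suc k)" for j k n
  proof (rule ccontr)
    assume "j \<noteq> k"
    then consider "Suc j \<le> k" | "Suc k \<le> j" by linarith
    then show False
    proof cases
      case 1 then have "m (Suc j) \<le> m k" using smono by (simp add: strict_mono_less_eq)
      then show False using that by simp
    next
      case 2 then have "m (Suc k) \<le> m j" using smono by (simp add: strict_mono_less_eq)
      then show False using that by simp
    qed
  qed
  define kk where "kk n = (LEAST k. n < m (Suc k))" for n
  have kk: "m (kk n) \<le> n \<and> n < m (Suc (kk n))" for n
  proof -
    have ex: "n < m (Suc n)" using mge[of "Suc n"] by simp
    have 1: "n < m (Suc (kk n))" unfolding kk_def by (rule LeastI[where P="\<lambda>k. n < m (Suc k)", OF ex])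
    have 2: "m (kk n) \<le> n"
    proof (cases "kk n")
      case 0 then show ?thesis by (simp add: m_def)
    next
      case (Suc j)
      have "\<not> n < m (Suc j)"
      proof
        assume "n < m (Suc j)"
        then have "kk n \<le> j" unfolding kk_def by (rule Least_le)
        then show False using Suc by simp
      qed
      then show ?thesis using Suc by simp
    qed
    show ?thesis using 1 2 by simp
  qed
  have kk_eq: "kk n = k" if "m k \<le> n" "n < m (Suc k)" for n k
    using uniq[of "kk n" n k] kk[of n] that by blast
  define z where "z n = xf (m (kk n)) n" for n
  define w where "w n = sc (if a n = 0 then 0 else of_real (norm (a n)) / a n) (z n)" for n
  have wb: "q (w n) \<le> 1" for n
    using NX(1)[of "m (kk n)" n] nonneg[of "z n"]
    by (auto simp: w_def z_def hom norm_divide)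
  have aw: "sc (a n) (w n) = sc (of_real (norm (a n))) (z n)" for n
    by (simp add: w_def)
  obtain s where s: "(\<lambda>N. q ((\<Sum>n<N. sc (a n) (w n)) - s)) \<longlonglongrightarrow> 0"
    using H[of w] wb unfolding series_converges_def by blast
  define S where "S N = (\<Sum>n<N. sc (a n) (w n))" for N
  have "\<epsilon> / (2*K) > 0" using e K1 by simp
  from LIMSEQ_D[OF s this] obtain N0 where N0: "\<And>N. N \<ge> N0 \<Longrightarrow> q (S N - s) < \<epsilon> / (2*K)"
    unfolding S_def using nonneg by fastforce
  define k where "k = N0"
  have mk: "m k \<ge> N0" "m (Suc k) \<ge> N0" using mge[of k] mge[of "Suc k"] by (auto simp: k_def)
  have "S (m (Suc k)) - S (m k) = (S (m (Suc k)) - s) + (s - S (m k))" by simp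
  then have "q (S (m (Suc k)) - S (m k)) \<le> K * (q (S (m (Suc k)) - s) + q (s - S (m k)))"
    using tri by metis
  also have "\<dots> < K * (\<epsilon> / (2*K) + \<epsilon> / (2*K))"
    using N0[OF mk(1)] N0[OF mk(2)] q_sym[of s "S (m k)"] K1
    by (intro mult_strict_left_mono add_strict_mono) auto
  also have "\<dots> = \<epsilon>" using K1 by (simp add: field_simps)
  finally have lt: "q (S (m (Suc k)) - S (m k)) < \<epsilon>" .
  have "S (m (Suc k)) - S (m k) = (\<Sum>n\<in>{m k..<m (Suc k)}. sc (a n) (w n))"
    unfolding S_def by (rule block_sum) (use smono in \<open>simp add: strict_mono_less_eq\<close>)
  also have "\<dots> = (\<Sum>n\<in>{m k..<Nf (m k)}. sc (of_real (norm (a n))) (xf (m k) n))"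
    unfolding mS[symmetric]
  proof (rule sum.cong[OF refl])
    fix n assume "n \<in> {m k..<m (Suc k)}"
    then have "kk n = k" by (intro kk_eq) auto
    then show "sc (a n) (w n) = sc (of_real (norm (a n))) (xf (m k) n)" by (simp add: aw z_def)
  qed
  finally show False using NX(2)[of "m k"] lt unfolding blk by simp
qed

lemma lambdaX_abs: "lambdaX sc q (\<lambda>n. of_real (norm (c n))) = lambdaX sc q c"
  unfolding lambdaX_def by simp

lemma backward:
  assumes H: "\<And>x. (\<exists>C. \<forall>n. q (x n) \<le> C) \<Longrightarrow> series_converges sc q a x"
  shows "a \<in> galb_b sc q"
proof -
  have tr: "a - (\<lambda>n. if n < M then a n else 0) = (\<lambda>n. if n < M then 0 else a n)" for M
    by (rule ext) simp
  obtain M where M: "lambdaX sc q (\<lambda>n. if n < M then 0 else a n) \<le> ereal 1"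
    using tail_small[OF H, of 1] by auto
  define A where "A = (\<Sum>n<M. norm (a n))"
  have A0: "0 \<le> A" unfolding A_def by (simp add: sum_nonneg)
  have bound: "q (\<Sum>n<N. sc (of_real (norm (a n))) (x n)) \<le> K * (1 + (2*K)^M * A)"
    if xb: "\<forall>n. q (x n) \<le> 1" for N x
  proof -
    define y where "y n = sc (of_real (norm (a n))) (x n)" for n
    have split: "(\<Sum>n<N. y n) = (\<Sum>n<N. sc (of_real (norm (if n < M then 0 else a n))) (x n))
       + (\<Sum>n<N. if n < M then y n else 0)"
      unfolding sum.distrib[symmetric] by (rule sum.cong) (auto simp: y_def)
    have q1: "q (\<Sum>n<N. sc (of_real (norm (if n < M then 0 else a n))) (x n)) \<le> 1 * 1"
      by (rule L1[where c="\<lambda>n. of_real (norm (if n < M then 0 else a n))"]) (use xb M lambdaX_abs in auto)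
    have "(\<Sum>n<N. if n < M then y n else 0) = (\<Sum>n\<in>{n\<in>{..<N}. n < M}. y n)"
      by (rule sum.inter_filter[symmetric]) simp
    also have "{n\<in>{..<N}. n < M} = {..<min N M}" by auto
    finally have eq2: "(\<Sum>n<N. if n < M then y n else 0) = (\<Sum>n<min N M. y n)" .
    have yb: "q (y n) \<le> A" if "n < M" for n
    proof -
      have "q (y n) = norm (a n) * q (x n)" by (simp add: y_def hom)
      also have "\<dots> \<le> norm (a n) * 1" using xb by (intro mult_left_mono) auto
      also have "\<dots> \<le> A" unfolding A_def using that member_le_sum[of n "{..<M}" "\<lambda>n. norm (a n)"] by auto
      finally show ?thesis .
    qed
    have "q (\<Sum>n<min N M. y n) \<le> (2*K)^(min N M) * A"
      by (rule fin_bound) (use yb A0 in auto)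
    also have "\<dots> \<le> (2*K)^M * A"
      using K1 A0 by (intro mult_right_mono power_increasing) auto
    finally have q2: "q (\<Sum>n<N. if n < M then y n else 0) \<le> (2*K)^M * A" unfolding eq2 .
    have "q (\<Sum>n<N. y n) \<le> K * (q (\<Sum>n<N. sc (of_real (norm (if n < M then 0 else a n))) (x n))
       + q (\<Sum>n<N. if n < M then y n else 0))" unfolding split by (rule tri)
    also have "\<dots> \<le> K * (1 + (2*K)^M * A)"
      using q1 q2 K1 by (intro mult_left_mono add_mono) auto
    finally show ?thesis unfolding y_def .
  qed
  have "lambdaX sc q a \<le> ereal (K * (1 + (2*K)^M * A))"
    unfolding lambdaX_def by (rule SUP_least) (use bound in auto)
  then have galb: "a \<in> galb sc q" unfolding galb_def
    by (metis less_ereal.simps(4) order.strict_trans1 mem_Collect_eq)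
  show ?thesis unfolding galb_b_def
  proof (intro CollectI conjI allI impI galb)
    fix e :: real assume e: "e > 0"
    then obtain M where M: "lambdaX sc q (\<lambda>n. if n < M then 0 else a n) \<le> ereal (e/2)"
      using tail_small[OF H, of "e/2"] by auto
    have "finite {n. (if n < M then a n else 0) \<noteq> 0}"
      by (rule finite_subset[of _ "{..<M}"]) auto
    moreover have "lambdaX sc q (a - (\<lambda>n. if n < M then a n else 0)) < ereal e"
      unfolding tr
    proof (rule order.strict_trans1[OF M])
      show "ereal (e/2) < ereal e" using e by simp
    qed
    ultimately show "\<exists>b. finite {n. b n \<noteq> 0} \<and> lambdaX sc q (a - b) < ereal e" by (intro exI[of _ "\<lambda>n. if n < M then a n else 0"]) simp
  qed
qed

end

theorem lemma4p9:
  fixes sc :: "'k::real_normed_field \<Rightarrow> 'a::ab_group_add \<Rightarrow> 'a"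
    and q :: "'a \<Rightarrow> real" and a :: "nat \<Rightarrow> 'k"
  assumes "quasi_banach sc q"
  shows "a \<in> galb_b sc q \<longleftrightarrow>
    (\<forall>x :: nat \<Rightarrow> 'a. (\<exists>C. \<forall>n. q (x n) \<le> C) \<longrightarrow> series_converges sc q a x)"
proof -
  from assms obtain K where "qn sc q K" and comp: "quasi_complete q"
    unfolding quasi_banach_def quasi_norm_def qn_def by blast
  then interpret qn sc q K by simp
  show ?thesis using forward[OF comp] backward by blast
qed

end
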